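(* Let $(F_n)_{n\geq0}$ be the Fibonacci sequence and $\Phi=\frac{1+\sqrt5}{2}$ the golden ratio. Then for every positive integer $n$, \[\Phi^{\frac{n^2}{4}-\frac{9}{4}}\leq \mathrm{lcm}(F_1,F_2,\dots,F_n)\leq \Phi^{\frac{n^2}{3}+\frac{4n}{3}}.\]
   Context: The Fibonacci sequence is defined by $F_0=0$, $F_1=1$, $F_{n+2}=F_{n+1}+F_n$ for $n\geq0$. $\mathrm{lcm}$ denotes the least common positive multiple. *)

theory Defs
  imports Complex_Main "HOL-Number_Theory.Fib"
begin

definition golden_ratio :: real where
  "golden_ratio = (1 + sqrt 5) / 2"

end

theory Submission
  imports Defs "HOL-Computational_Algebra.Primes"
begin

abbreviation "phi \<equiv> golden_ratio"
definition psi :: real where "psi = 1 - golden_ratio"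

lemma phi_gt1: "phi > 1"
proof -
  have "sqrt 5 > 1" by simp
  thus ?thesis unfolding golden_ratio_def by simp
qed

lemma phi_sq: "phi * phi = phi + 1"
  unfolding golden_ratio_def by (simp add: field_simps)

lemma psi_alt: "psi = (1 - sqrt 5) / 2"
  unfolding psi_def golden_ratio_def by (simp add: field_simps)

lemma psi_abs: "\<bar>psi\<bar> < 1"
proof -
  have "sqrt 5 < 3" by (rule real_less_lsqrt) auto
  moreover have "sqrt 5 > 1" by simp
  ultimately show ?thesis unfolding psi_alt by simp
qed

lemma fib_closed: "real (fib n) = (phi ^ n - psi ^ n) / sqrt 5"
  using fib_closed_form[of n] unfolding psi_alt golden_ratio_def by simp

lemma fib_add_ident: "real (fib (d + i)) = phi ^ d * real (fib i) + psi ^ i * real (fib d)"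
  unfolding fib_closed by (simp add: field_simps power_add)

lemma fib_bounds_aux:
  "phi ^ (k+1) \<le> phi\<^sup>2 * real (fib (k+1)) \<and> phi ^ (k+2) \<le> phi\<^sup>2 * real (fib (k+2))
   \<and> real (fib (k+1)) * phi \<le> phi ^ (k+1) \<and> real (fib (k+2)) * phi \<le> phi ^ (k+2)"
proof (induction k)
  case 0
  have "phi \<le> phi\<^sup>2" using phi_gt1 by (simp add: power2_eq_square)
  moreover have "phi \<le> phi\<^sup>2" using phi_gt1 by (simp add: power2_eq_square)
  ultimately show ?case by (simp add: numeral_2_eq_2)
next
  case (Suc k)
  have e1: "phi ^ (k+3) = phi ^ (k+2) + phi ^ (k+1)"
  proof -
    have "phi ^ (k+3) = phi ^ (k+1) * (phi * phi)" by (simp add: power_add numeral_3_eq_3 algebra_simps)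
    thus ?thesis by (simp add: phi_sq algebra_simps power_add numeral_2_eq_2)
  qed
  have f: "real (fib (k+3)) = real (fib (k+2)) + real (fib (k+1))"
    using fib_plus_2[of "k+1"] by (simp add: numeral_3_eq_3 numeral_2_eq_2)
  show ?case using Suc e1 f by (simp add: algebra_simps numeral_3_eq_3 numeral_2_eq_2)
qed

lemma fib_lower: "j \<ge> 1 \<Longrightarrow> phi ^ j \<le> phi\<^sup>2 * real (fib j)"
  using fib_bounds_aux[of "j-1"] by simp

lemma fib_upper: "real (fib j) * phi \<le> phi ^ j"
proof (cases "j = 0")
  case True thus ?thesis by simp
next
  case False thus ?thesis using fib_bounds_aux[of "j-1"] by simp
qed

lemma fib_lower_powr: "j \<ge> 1 \<Longrightarrow> phi powr (real j - 2) \<le> real (fib j)"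
proof -
  assume j: "j \<ge> 1"
  have "phi powr (real j - 2) = phi ^ j / phi\<^sup>2"
    using phi_gt1 by (simp add: powr_diff powr_realpow)
  also have "\<dots> \<le> real (fib j)" using fib_lower[OF j] phi_gt1 by (simp add: divide_le_eq mult.commute)
  finally show ?thesis .
qed

lemma fib_upper_powr: "j \<ge> 1 \<Longrightarrow> real (fib j) \<le> phi powr (real j - 1)"
proof -
  assume j: "j \<ge> 1"
  have "phi powr (real j - 1) = phi ^ j / phi"
    using phi_gt1 by (simp add: powr_diff powr_realpow)
  thus ?thesis using fib_upper[of j] phi_gt1 by (simp add: le_divide_eq)
qed

lemma psi_phi: "psi * phi = -1"
  unfolding psi_def using phi_sq by (simp add: algebra_simps)

lemma even_factor: "even i \<Longrightarrow> phi ^ d * real (fib i) \<le> real (fib (d + i))"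
proof -
  assume "even i"
  hence "psi ^ i \<ge> 0" by (simp add: zero_le_even_power)
  thus ?thesis unfolding fib_add_ident by simp
qed

lemma pair_factor:
  assumes "even i" "i \<ge> 2"
  shows "phi ^ (2*d) * (real (fib i) * real (fib (i+1))) \<le> real (fib (d + i)) * real (fib (d + (i+1)))"
proof -
  define u where "u = phi ^ d"
  define f where "f = real (fib d)"
  define a where "a = psi ^ i"
  define b where "b = real (fib i)"
  define c where "c = real (fib (i+1))"
  have e1: "real (fib (d + i)) = u * b + a * f" unfolding u_def b_def a_def f_def fib_add_ident by simp
  have e2: "real (fib (d + (i+1))) = u * c + psi * a * f" unfolding u_def c_def a_def f_def fib_add_ident by simp
  have a0: "a \<ge> 0" unfolding a_def using assms by (simp add: zero_le_even_power)
  have a1: "a \<le> 1"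
  proof -
    have "a = \<bar>psi\<bar> ^ i" unfolding a_def using assms(1) by (simp add: power_even_abs)
    also have "\<dots> \<le> 1" using psi_abs by (intro power_le_one) auto
    finally show ?thesis .
  qed
  have f0: "f \<ge> 0" unfolding f_def by simp
  have u0: "u > 0" unfolding u_def using phi_gt1 by simp
  have bc: "b \<le> c" unfolding b_def c_def using fib_mono[of i "i+1"] by simp
  have c1: "c \<ge> 1" unfolding c_def using fib_neq_0_nat[of "i+1"] by simp
  have fu: "f * phi \<le> u" unfolding f_def u_def by (rule fib_upper)
  have "u * (phi - 1) * phi = u * (phi * phi) - u * phi" by (simp add: algebra_simps)
  also have "\<dots> = u" unfolding phi_sq by (simp add: algebra_simps)
  finally have X: "u * (phi - 1) * phi = u" .
  have "f * phi \<le> u * (phi - 1) * phi" using fu X by linarith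
  hence fu2: "f \<le> u * (phi - 1)" using phi_gt1 by simp
  have "phi * c - b \<ge> (phi - 1) * c" using bc by (simp add: algebra_simps)
  moreover have "(phi - 1) * c \<ge> phi - 1" using c1 phi_gt1 by simp
  ultimately have "phi * c - b \<ge> phi - 1" by linarith
  hence "u * (phi * c - b) \<ge> u * (phi - 1)" using u0 by simp
  moreover have "a * f \<le> f" using a1 f0 a0 by (intro mult_left_le_one_le) auto
  ultimately have key: "u * (phi * c - b) \<ge> a * f" using fu2 by linarith
  have "phi * (u * (c + psi * b) + psi * a * f) = u*(phi*c) + (psi*phi)*(u*b) + (psi*phi)*(a*f)"
    by (simp add: algebra_simps)
  also have "\<dots> = u * (phi * c - b) - a * f" unfolding psi_phi by (simp add: algebra_simps)
  finally have "phi * (u * (c + psi * b) + psi * a * f) = u * (phi * c - b) - a * f" .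
  hence "phi * (u * (c + psi * b) + psi * a * f) \<ge> 0" using key by simp
  hence k2: "u * (c + psi * b) + psi * a * f \<ge> 0" using phi_gt1 by (simp add: zero_le_mult_iff)
  have "(u * b + a * f) * (u * c + psi * a * f) = u^2 * (b * c) + (a * f) * (u * (c + psi * b) + psi * a * f)"
    by (simp add: algebra_simps power2_eq_square)
  moreover have "(a * f) * (u * (c + psi * b) + psi * a * f) \<ge> 0" using a0 f0 k2 by simp
  moreover have "phi ^ (2*d) = u^2" unfolding u_def by (simp add: power_mult mult.commute)
  ultimately show ?thesis using e1 e2 b_def c_def by simp
qed

lemma prod_Suc1: "(\<Prod>i\<in>{1..Suc k}. (g i :: real)) = (\<Prod>i\<in>{1..k}. g i) * g (k+1)"
  by (simp add: prod.nat_ivl_Suc')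
lemma prod_Suc2: "(\<Prod>i\<in>{1..Suc (Suc k)}. (g i :: real)) = (\<Prod>i\<in>{1..k}. g i) * (g (k+1) * g (k+1+1))"
  by (simp add: prod.nat_ivl_Suc')

lemma prod_lower:
  "phi * (\<Prod>i\<in>{1..m}. real (fib (d + i))) \<ge> phi ^ (d*m) * (\<Prod>i\<in>{1..m}. real (fib i))"
proof (induction m rule: less_induct)
  case (less m)
  show ?case
  proof (cases "m \<le> 1")
    case True
    then consider "m = 0" | "m = 1" by linarith
    thus ?thesis
    proof cases
      case 1 thus ?thesis using phi_gt1 by simp
    next
      case 2
      have "phi ^ (d+1) \<le> phi\<^sup>2 * real (fib (d+1))" by (rule fib_lower) simp
      hence "phi * phi ^ d \<le> phi * (phi * real (fib (d+1)))" by (simp add: power2_eq_square algebra_simps)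
      hence "phi ^ d \<le> phi * real (fib (d+1))" using phi_gt1 by simp
      thus ?thesis using 2 by simp
    qed
  next
    case False
    show ?thesis
    proof (cases "even m")
      case True
      define k where "k = m - 1"
      have mk: "m = Suc k" using False k_def by simp
      have IH: "phi * (\<Prod>i\<in>{1..k}. real (fib (d + i))) \<ge> phi ^ (d*k) * (\<Prod>i\<in>{1..k}. real (fib i))"
        using less.IH[of k] mk by simp
      have ef: "phi ^ d * real (fib m) \<le> real (fib (d + m))" using True by (rule even_factor)
      have "phi ^ (d*m) * (\<Prod>i\<in>{1..m}. real (fib i)) = (phi ^ (d*k) * (\<Prod>i\<in>{1..k}. real (fib i))) * (phi ^ d * real (fib m))"
        unfolding mk by (simp add: prod.nat_ivl_Suc' power_add algebra_simps)
      also have "\<dots> \<le> (phi * (\<Prod>i\<in>{1..k}. real (fib (d + i)))) * real (fib (d + m))"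
        apply (rule mult_mono[OF IH ef])
        using phi_gt1 by (auto intro!: prod_nonneg mult_nonneg_nonneg)
      also have "\<dots> = phi * (\<Prod>i\<in>{1..m}. real (fib (d + i)))"
        unfolding mk by (simp add: prod.nat_ivl_Suc' algebra_simps)
      finally show ?thesis .
    next
      case odd: False
      define k where "k = m - 2"
      have mk: "m = Suc (Suc k)" using False k_def by simp
      have ek: "even (k+1)" using odd mk by simp
      have k1: "k + 1 \<ge> 2" using odd mk False by (cases k) auto
      have IH: "phi * (\<Prod>i\<in>{1..k}. real (fib (d + i))) \<ge> phi ^ (d*k) * (\<Prod>i\<in>{1..k}. real (fib i))"
        using less.IH[of k] mk by simp
      have pf: "phi ^ (2*d) * (real (fib (k+1)) * real (fib (k+1+1))) \<le> real (fib (d + (k+1))) * real (fib (d + (k+1+1)))"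
        by (rule pair_factor[OF ek k1])
      have pw: "phi ^ (d * Suc (Suc k)) = phi ^ (d*k) * phi ^ (2*d)"
      proof -
        have "d * Suc (Suc k) = d*k + 2*d" by simp
        thus ?thesis by (simp only: power_add)
      qed
      have "phi ^ (d*m) * (\<Prod>i\<in>{1..m}. real (fib i)) = (phi ^ (d*k) * (\<Prod>i\<in>{1..k}. real (fib i))) * (phi ^ (2*d) * (real (fib (k+1)) * real (fib (k+1+1))))"
        unfolding mk prod_Suc2 pw by (simp only: mult_ac)
      also have "\<dots> \<le> (phi * (\<Prod>i\<in>{1..k}. real (fib (d + i)))) * (real (fib (d + (k+1))) * real (fib (d + (k+1+1))))"
        apply (rule mult_mono[OF IH pf])
        using phi_gt1 by (auto intro!: prod_nonneg mult_nonneg_nonneg)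
      also have "\<dots> = phi * (\<Prod>i\<in>{1..m}. real (fib (d + i)))"
        unfolding mk prod_Suc2 by (simp only: mult_ac)
      finally show ?thesis .
    qed
  qed
qed

lemma fib_dvd_mono: "m dvd n \<Longrightarrow> fib m dvd fib n"
  by (metis fib_gcd gcd.commute gcd_dvd2 gcd_nat.absorb1)

lemma fib_dvd_diff:
  assumes "q dvd fib a" "q dvd fib b" "b \<le> a"
  shows "q dvd fib (a - b)"
proof -
  have "q dvd fib (gcd a b)" using assms by (simp add: fib_gcd)
  moreover have "gcd a b dvd a - b" using assms(3) by (simp add: dvd_diff_nat)
  ultimately show ?thesis using fib_dvd_mono dvd_trans by blast
qed

lemma count_lemma:
  "card {j\<in>{d+1..d+m}. q dvd fib j} \<le> (if \<exists>j\<in>{d+1..d+m}. q dvd fib j then 1 else 0) + card {i\<in>{1..m}. q dvd fib i}"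
proof (cases "\<exists>j\<in>{d+1..d+m}. q dvd fib j")
  case False
  hence E: "{j\<in>{d+1..d+m}. q dvd fib j} = {}" by blast
  have "card {j\<in>{d+1..d+m}. q dvd fib j} = 0" by (simp only: E card.empty)
  thus ?thesis by linarith
next
  case True
  define S where "S = {j\<in>{d+1..d+m}. q dvd fib j}"
  have fS: "finite S" unfolding S_def by simp
  have neS: "S \<noteq> {}" unfolding S_def using True by blast
  define m0 where "m0 = Min S"
  have m0S: "m0 \<in> S" unfolding m0_def using fS neS by simp
  have m0le: "\<And>j. j \<in> S \<Longrightarrow> m0 \<le> j" unfolding m0_def using fS by simp
  have "inj_on (\<lambda>j. j - m0) (S - {m0})"
  proof (rule inj_onI)
    fix x y assume xy: "x \<in> S - {m0}" "y \<in> S - {m0}" "x - m0 = y - m0"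
    have "m0 \<le> x" "m0 \<le> y" using xy m0le by auto
    thus "x = y" using xy(3) by arith
  qed
  moreover have "(\<lambda>j. j - m0) ` (S - {m0}) \<subseteq> {i\<in>{1..m}. q dvd fib i}"
  proof
    fix x assume "x \<in> (\<lambda>j. j - m0) ` (S - {m0})"
    then obtain j where j: "j \<in> S" "j \<noteq> m0" "x = j - m0" by auto
    have "m0 \<le> j" using m0le j by simp
    hence "m0 < j" using j by simp
    moreover have "j \<le> d + m" "m0 \<ge> d + 1" using j(1) m0S unfolding S_def by auto
    moreover have "q dvd fib (j - m0)" using j(1) m0S \<open>m0 \<le> j\<close> unfolding S_def
      by (intro fib_dvd_diff) auto
    ultimately have "j - m0 \<in> {i\<in>{1..m}. q dvd fib i}"
    proof -
      assume h: "m0 < j" "j \<le> d + m" "m0 \<ge> d + 1" "q dvd fib (j - m0)"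
      have "1 \<le> j - m0" using h(1) by simp
      moreover have "j - m0 \<le> m" using h(2,3) by linarith
      ultimately show ?thesis using h(4) by simp
    qed
    thus "x \<in> {i\<in>{1..m}. q dvd fib i}" using j(3) by simp
  qed
  ultimately have "card (S - {m0}) \<le> card {i\<in>{1..m}. q dvd fib i}"
    by (intro card_inj_on_le) simp_all
  moreover have "card S = Suc (card (S - {m0}))" using m0S fS by (intro card.remove)
  ultimately have "card S \<le> 1 + card {i\<in>{1..m}. q dvd fib i}" by linarith
  moreover have "(if \<exists>j\<in>{d+1..d+m}. q dvd fib j then 1 else 0) = (1::nat)" using True by (simp only: if_True)
  ultimately show ?thesis unfolding S_def by linarith
qed

lemma mult_card:
  fixes p x :: nat
  assumes "prime p" "x \<noteq> 0" "multiplicity p x \<le> N"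
  shows "multiplicity p x = card {e\<in>{1..N}. p ^ e dvd x}"
proof -
  have iff: "p ^ e dvd x \<longleftrightarrow> e \<le> multiplicity p x" for e
    by (rule power_dvd_iff_le_multiplicity) (use assms not_prime_unit in auto)
  have "{e\<in>{1..N}. p ^ e dvd x} = {1..multiplicity p x}"
    unfolding iff using assms(3) by auto
  thus ?thesis by simp
qed

lemma card_le_mult:
  fixes p x :: nat
  assumes "prime p" "x \<noteq> 0"
  shows "card {e\<in>{1..N}. p ^ e dvd x} \<le> multiplicity p x"
proof -
  have iff: "p ^ e dvd x \<longleftrightarrow> e \<le> multiplicity p x" for e
    by (rule power_dvd_iff_le_multiplicity) (use assms not_prime_unit in auto)
  have "{e\<in>{1..N}. p ^ e dvd x} \<subseteq> {1..multiplicity p x}"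
    unfolding iff by auto
  hence "card {e\<in>{1..N}. p ^ e dvd x} \<le> card {1..multiplicity p x}" by (intro card_mono) auto
  thus ?thesis by simp
qed

lemma card_as_sum: "finite A \<Longrightarrow> card {x\<in>A. P x} = (\<Sum>x\<in>A. if P x then 1 else 0)"
  using sum.inter_filter[of A "\<lambda>_. 1::nat" P] by simp

lemma swap_card:
  assumes "finite A" "finite E"
  shows "(\<Sum>j\<in>A. card {e\<in>E. P j e}) = (\<Sum>e\<in>E. card {j\<in>A. P j e})"
  using assms by (simp add: card_as_sum sum.swap[of _ A E])

abbreviation LL :: "nat \<Rightarrow> nat" where "LL n \<equiv> Lcm (fib ` {1..n})"

lemma LL_nz: "LL n \<noteq> 0"
proof -
  have "0 \<notin> fib ` {1..n}"
  proof
    assume "0 \<in> fib ` {1..n}"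
    then obtain x where "x \<in> {1..n}" "fib x = 0" by auto
    with fib_neq_0_nat[of x] show False by simp
  qed
  thus ?thesis by (simp add: Lcm_0_iff_nat)
qed

lemma fib_dvd_LL: "1 \<le> j \<Longrightarrow> j \<le> n \<Longrightarrow> fib j dvd LL n"
  by (rule dvd_Lcm) auto

lemma fibomial_dvd:
  assumes "d + m \<le> n"
  shows "(\<Prod>j\<in>{d+1..d+m}. fib j) dvd LL n * (\<Prod>i\<in>{1..m}. fib i)"
proof (rule multiplicity_le_imp_dvd)
  let ?X = "\<Prod>j\<in>{d+1..d+m}. fib j"
  show X0: "?X \<noteq> 0" using fib_neq_0_nat by (auto simp: prod_zero_iff)
  fix p :: nat assume p: "prime p"
  define N where "N = multiplicity p ?X"
  define E where "E = {1..N}"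
  have fz: "0 \<notin> fib ` A" if "A \<subseteq> {1..}" for A
  proof
    assume "0 \<in> fib ` A"
    then obtain x where "x \<in> A" "0 = fib x" by (rule imageE)
    with that fib_neq_0_nat[of x] show False by auto
  qed
  have "multiplicity p ?X = (\<Sum>j\<in>{d+1..d+m}. multiplicity p (fib j))"
    using p by (intro prime_elem_multiplicity_prod_distrib fz) auto
  also have "\<dots> = (\<Sum>j\<in>{d+1..d+m}. card {e\<in>E. p ^ e dvd fib j})"
  proof (intro sum.cong refl)
    fix j assume j: "j \<in> {d+1..d+m}"
    have "fib j dvd ?X" using j by (intro dvd_prodI) auto
    hence "multiplicity p (fib j) \<le> N" unfolding N_def using X0 p
      by (intro dvd_imp_multiplicity_le) auto
    thus "multiplicity p (fib j) = card {e\<in>E. p ^ e dvd fib j}" unfolding E_def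
      using p j fib_neq_0_nat[of j] by (intro mult_card) auto
  qed
  also have "\<dots> = (\<Sum>e\<in>E. card {j\<in>{d+1..d+m}. p ^ e dvd fib j})"
    unfolding E_def by (rule swap_card) auto
  also have "\<dots> \<le> (\<Sum>e\<in>E. (if \<exists>j\<in>{d+1..d+m}. p ^ e dvd fib j then 1 else 0) + card {i\<in>{1..m}. p ^ e dvd fib i})"
    by (intro sum_mono count_lemma)
  also have "\<dots> = card {e\<in>E. \<exists>j\<in>{d+1..d+m}. p ^ e dvd fib j} + (\<Sum>i\<in>{1..m}. card {e\<in>E. p ^ e dvd fib i})"
  proof -
    have fE: "finite E" unfolding E_def by simp
    have "(\<Sum>e\<in>E. (if \<exists>j\<in>{d+1..d+m}. p ^ e dvd fib j then 1 else 0)) = card {e\<in>E. \<exists>j\<in>{d+1..d+m}. p ^ e dvd fib j}"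
      using card_as_sum[OF fE, of "\<lambda>e. \<exists>j\<in>{d+1..d+m}. p ^ e dvd fib j"] by simp
    moreover have "(\<Sum>e\<in>E. card {i\<in>{1..m}. p ^ e dvd fib i}) = (\<Sum>i\<in>{1..m}. card {e\<in>E. p ^ e dvd fib i})"
      using swap_card[OF _ fE, of "{1..m}" "\<lambda>i e. p ^ e dvd fib i"] by simp
    ultimately show ?thesis by (simp only: sum.distrib)
  qed
  also have "\<dots> \<le> multiplicity p (LL n) + (\<Sum>i\<in>{1..m}. multiplicity p (fib i))"
  proof (intro add_mono sum_mono)
    have "{e\<in>E. \<exists>j\<in>{d+1..d+m}. p ^ e dvd fib j} \<subseteq> {e\<in>E. p ^ e dvd LL n}"
    proof
      fix e assume "e \<in> {e\<in>E. \<exists>j\<in>{d+1..d+m}. p ^ e dvd fib j}"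
      then obtain j where "e \<in> E" "j\<in>{d+1..d+m}" "p ^ e dvd fib j" by auto
      moreover have "fib j dvd LL n" using \<open>j\<in>{d+1..d+m}\<close> assms by (intro fib_dvd_LL) auto
      ultimately show "e \<in> {e\<in>E. p ^ e dvd LL n}" using dvd_trans by blast
    qed
    hence "card {e\<in>E. \<exists>j\<in>{d+1..d+m}. p ^ e dvd fib j} \<le> card {e\<in>E. p ^ e dvd LL n}"
      unfolding E_def by (intro card_mono) auto
    also have "\<dots> \<le> multiplicity p (LL n)" unfolding E_def using p LL_nz by (intro card_le_mult) auto
    finally show "card {e\<in>E. \<exists>j\<in>{d+1..d+m}. p ^ e dvd fib j} \<le> multiplicity p (LL n)" .
    fix i assume "i \<in> {1..m}"
    thus "card {e\<in>E. p ^ e dvd fib i} \<le> multiplicity p (fib i)" unfolding E_def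
      using p fib_neq_0_nat[of i] by (intro card_le_mult) auto
  qed
  also have "\<dots> = multiplicity p (LL n * (\<Prod>i\<in>{1..m}. fib i))"
  proof -
    have P0: "(\<Prod>i\<in>{1..m}. fib i) \<noteq> 0" using fib_neq_0_nat by (auto simp: prod_zero_iff)
    have "multiplicity p (LL n * (\<Prod>i\<in>{1..m}. fib i)) = multiplicity p (LL n) + multiplicity p (\<Prod>i\<in>{1..m}. fib i)"
      using p LL_nz P0 by (intro prime_elem_multiplicity_mult_distrib) auto
    moreover have "multiplicity p (\<Prod>i\<in>{1..m}. fib i) = (\<Sum>i\<in>{1..m}. multiplicity p (fib i))"
      using p by (intro prime_elem_multiplicity_prod_distrib fz) auto
    ultimately show ?thesis by simp
  qed
  finally show "multiplicity p ?X \<le> multiplicity p (LL n * (\<Prod>i\<in>{1..m}. fib i))" .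
qed

lemma lower_bound:
  assumes "n \<ge> 1"
  shows "phi powr ((real n)\<^sup>2 / 4 - 9 / 4) \<le> real (LL n)"
proof -
  define m where "m = n div 2"
  define d where "d = n - m"
  have dm: "d + m = n" unfolding d_def m_def by simp
  have dv: "(\<Prod>j\<in>{d+1..d+m}. fib j) dvd LL n * (\<Prod>i\<in>{1..m}. fib i)"
    using dm by (intro fibomial_dvd) simp
  have Q0: "(\<Prod>i\<in>{1..m}. fib i) > 0" using fib_neq_0_nat by (intro prod_pos) auto
  have L0: "LL n > 0" using LL_nz[of n] by linarith
  have "LL n * (\<Prod>i\<in>{1..m}. fib i) > 0" by (intro mult_pos_pos L0 Q0)
  hence le: "(\<Prod>j\<in>{d+1..d+m}. fib j) \<le> LL n * (\<Prod>i\<in>{1..m}. fib i)"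
    using dv by (intro dvd_imp_le) auto
  have re: "(\<Prod>j\<in>{d+1..d+m}. fib j) = (\<Prod>i\<in>{1..m}. fib (d + i))"
    using prod.shift_bounds_cl_nat_ivl[of fib 1 d m] by (simp add: add.commute)
  define P where "P = (\<Prod>i\<in>{1..m}. real (fib (d + i)))"
  define Q where "Q = (\<Prod>i\<in>{1..m}. real (fib i))"
  have Pe: "P = real (\<Prod>i\<in>{1..m}. fib (d + i))" unfolding P_def by (simp only: of_nat_prod)
  have Qe: "Q = real (\<Prod>i\<in>{1..m}. fib i)" unfolding Q_def by (simp only: of_nat_prod)
  have "real (\<Prod>i\<in>{1..m}. fib (d + i)) \<le> real (LL n * (\<Prod>i\<in>{1..m}. fib i))"
    using le unfolding re by (simp only: of_nat_le_iff)
  hence PQ: "P \<le> real (LL n) * Q" unfolding Pe Qe by (simp only: of_nat_mult)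
  have Qpos: "Q > 0" unfolding Qe using Q0 by (simp only: of_nat_0_less_iff)
  have "phi ^ (d*m) * Q \<le> phi * P" unfolding P_def Q_def by (rule prod_lower)
  also have "\<dots> \<le> phi * (real (LL n) * Q)" using PQ phi_gt1 by simp
  finally have "phi ^ (d*m) * Q \<le> (phi * real (LL n)) * Q" by (simp add: algebra_simps)
  hence k: "phi ^ (d*m) \<le> phi * real (LL n)" using Qpos by simp
  have ex: "(real n)\<^sup>2 / 4 - 9 / 4 \<le> real (d*m) - 1"
  proof (cases "even n")
    case True
    then have "n = 2*m" unfolding m_def by simp
    moreover have "d = m" using dm \<open>n = 2*m\<close> by simp
    ultimately show ?thesis by (simp add: power2_eq_square algebra_simps)
  next
    case False
    then have "n = 2*m+1" unfolding m_def by simp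
    moreover have "d = m + 1" using dm \<open>n = 2*m+1\<close> by simp
    ultimately show ?thesis by (simp add: power2_eq_square algebra_simps)
  qed
  have "phi powr ((real n)\<^sup>2 / 4 - 9 / 4) \<le> phi powr (real (d*m) - 1)"
    using ex phi_gt1 by (intro powr_mono) auto
  also have "\<dots> = phi powr real (d*m) / phi powr 1" by (rule powr_diff)
  also have "\<dots> = phi ^ (d*m) / phi" using phi_gt1 by (simp only: powr_realpow powr_one_gt_zero_iff) simp
  also have "\<dots> \<le> real (LL n)" using k phi_gt1 by (simp add: divide_le_eq mult.commute)
  finally show ?thesis .
qed

definition U :: "nat \<Rightarrow> real" where
  "U n = (real n)\<^sup>2 / 3 + (if n mod 6 = 0 \<or> n mod 6 = 4 then 2 * real n / 3
     else if n mod 6 = 1 \<or> n mod 6 = 5 then real n - 4/3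
     else if n mod 6 = 2 then 5 * real n / 6 - 1 else 5 * real n / 6 - 1/2)"

lemma U0: "U (6*t) = (real (6*t))\<^sup>2 / 3 + 2 * real (6*t) / 3"
proof -
  have "(6*t) mod 6 = (0::nat)" by presburger
  hence "U (6*t) = (real (6*t))\<^sup>2 / 3 + (if (0::nat) = 0 \<or> (0::nat) = 4 then 2 * real (6*t) / 3
     else if (0::nat) = 1 \<or> (0::nat) = 5 then real (6*t) - 4/3
     else if (0::nat) = 2 then 5 * real (6*t) / 6 - 1 else 5 * real (6*t) / 6 - 1/2)" unfolding U_def by (simp only:)
  thus ?thesis by simp
qed
lemma U1: "U (6*t+1) = (real (6*t+1))\<^sup>2 / 3 + real (6*t+1) - 4/3"
proof -
  have "(6*t+1) mod 6 = (1::nat)" by presburger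
  hence "U (6*t+1) = (real (6*t+1))\<^sup>2 / 3 + (if (1::nat) = 0 \<or> (1::nat) = 4 then 2 * real (6*t+1) / 3
     else if (1::nat) = 1 \<or> (1::nat) = 5 then real (6*t+1) - 4/3
     else if (1::nat) = 2 then 5 * real (6*t+1) / 6 - 1 else 5 * real (6*t+1) / 6 - 1/2)" unfolding U_def by (simp only:)
  thus ?thesis by simp
qed
lemma U2: "U (6*t+2) = (real (6*t+2))\<^sup>2 / 3 + 5 * real (6*t+2) / 6 - 1"
proof -
  have "(6*t+2) mod 6 = (2::nat)" by presburger
  hence "U (6*t+2) = (real (6*t+2))\<^sup>2 / 3 + (if (2::nat) = 0 \<or> (2::nat) = 4 then 2 * real (6*t+2) / 3
     else if (2::nat) = 1 \<or> (2::nat) = 5 then real (6*t+2) - 4/3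
     else if (2::nat) = 2 then 5 * real (6*t+2) / 6 - 1 else 5 * real (6*t+2) / 6 - 1/2)" unfolding U_def by (simp only:)
  thus ?thesis by simp
qed
lemma U3: "U (6*t+3) = (real (6*t+3))\<^sup>2 / 3 + 5 * real (6*t+3) / 6 - 1/2"
proof -
  have "(6*t+3) mod 6 = (3::nat)" by presburger
  hence "U (6*t+3) = (real (6*t+3))\<^sup>2 / 3 + (if (3::nat) = 0 \<or> (3::nat) = 4 then 2 * real (6*t+3) / 3
     else if (3::nat) = 1 \<or> (3::nat) = 5 then real (6*t+3) - 4/3
     else if (3::nat) = 2 then 5 * real (6*t+3) / 6 - 1 else 5 * real (6*t+3) / 6 - 1/2)" unfolding U_def by (simp only:)
  thus ?thesis by simp
qed
lemma U4: "U (6*t+4) = (real (6*t+4))\<^sup>2 / 3 + 2 * real (6*t+4) / 3"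
proof -
  have "(6*t+4) mod 6 = (4::nat)" by presburger
  hence "U (6*t+4) = (real (6*t+4))\<^sup>2 / 3 + (if (4::nat) = 0 \<or> (4::nat) = 4 then 2 * real (6*t+4) / 3
     else if (4::nat) = 1 \<or> (4::nat) = 5 then real (6*t+4) - 4/3
     else if (4::nat) = 2 then 5 * real (6*t+4) / 6 - 1 else 5 * real (6*t+4) / 6 - 1/2)" unfolding U_def by (simp only:)
  thus ?thesis by simp
qed
lemma U5: "U (6*t+5) = (real (6*t+5))\<^sup>2 / 3 + real (6*t+5) - 4/3"
proof -
  have "(6*t+5) mod 6 = (5::nat)" by presburger
  hence "U (6*t+5) = (real (6*t+5))\<^sup>2 / 3 + (if (5::nat) = 0 \<or> (5::nat) = 4 then 2 * real (6*t+5) / 3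
     else if (5::nat) = 1 \<or> (5::nat) = 5 then real (6*t+5) - 4/3
     else if (5::nat) = 2 then 5 * real (6*t+5) / 6 - 1 else 5 * real (6*t+5) / 6 - 1/2)" unfolding U_def by (simp only:)
  thus ?thesis by simp
qed

lemma U_le: "U n \<le> (real n)\<^sup>2 / 3 + 4 * real n / 3"
  unfolding U_def by auto

lemma LL_Suc: "LL (Suc n) = lcm (fib (Suc n)) (LL n)"
proof -
  have "{1..Suc n} = insert (Suc n) {1..n}" by (rule atLeastAtMostSuc_conv) simp
  thus ?thesis by (simp only: image_insert Lcm_insert)
qed

lemma lcm_g:
  fixes a b g :: nat
  assumes "g dvd a" "g dvd b" "a > 0"
  shows "lcm b a * g \<le> a * b"
proof -
  have "g dvd gcd a b" using assms by simp
  moreover have "gcd a b > 0" using assms by simp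
  ultimately have "g \<le> gcd a b" by (rule dvd_imp_le)
  hence "lcm b a * g \<le> lcm b a * gcd a b" by (rule mult_le_mono2)
  also have "\<dots> = a * b" using prod_gcd_lcm_nat[of a b] by (simp add: lcm.commute mult.commute)
  finally show ?thesis .
qed

lemma step_gen:
  assumes "g dvd LL n" "g dvd fib (Suc n)"
  shows "LL (Suc n) * g \<le> LL n * fib (Suc n)"
proof -
  have "LL n > 0" using LL_nz[of n] by linarith
  thus ?thesis unfolding LL_Suc using lcm_g[OF assms] by simp
qed

lemma finish:
  fixes x y A B u a b v :: real
  assumes "x * A \<le> y * B" "0 \<le> x" "y \<le> phi powr u" "phi powr a \<le> A" "B \<le> phi powr b" "0 \<le> B"
    and "u + b - a \<le> v"
  shows "x \<le> phi powr v"
proof -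
  have "x * phi powr a \<le> x * A" using assms(2,4) by (rule mult_left_mono[rotated])
  also have "\<dots> \<le> y * B" by (rule assms(1))
  also have "\<dots> \<le> phi powr u * phi powr b" using assms(3,5,6) by (intro mult_mono) auto
  also have "\<dots> = phi powr (u + b)" by (simp add: powr_add)
  finally have "x * phi powr a \<le> phi powr (u + b)" .
  hence "x \<le> phi powr (u + b) / phi powr a" using phi_gt1 by (simp add: le_divide_eq)
  also have "\<dots> = phi powr (u + b - a)" by (simp add: powr_diff)
  also have "\<dots> \<le> phi powr v" using assms(7) phi_gt1 by (intro powr_mono) auto
  finally show ?thesis .
qed

lemma apply_step:
  assumes "LL (Suc n) * g \<le> LL n * h" "real (LL n) \<le> phi powr U n" "phi powr a \<le> real g"
    "real h \<le> phi powr b" "U n + b - a \<le> U (Suc n)"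
  shows "real (LL (Suc n)) \<le> phi powr U (Suc n)"
proof -
  have "real (LL (Suc n) * g) \<le> real (LL n * h)" using assms(1) by (simp only: of_nat_le_iff)
  hence "real (LL (Suc n)) * real g \<le> real (LL n) * real h" by (simp only: of_nat_mult)
  show ?thesis
  proof (rule finish[of _ "real g" "real (LL n)" "real h"])
    show "real (LL (Suc n)) * real g \<le> real (LL n) * real h" by fact
  qed (use assms(2-5) in simp_all)
qed

lemma simple_step:
  assumes "real (LL n) \<le> phi powr U n" "U n + (real (Suc n) - 1) \<le> U (Suc n)"
  shows "real (LL (Suc n)) \<le> phi powr U (Suc n)"
proof (rule apply_step[where g=1 and h="fib (Suc n)" and a=0 and b="real (Suc n) - 1"])
  show "LL (Suc n) * 1 \<le> LL n * fib (Suc n)" by (rule step_gen) auto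
  show "real (fib (Suc n)) \<le> phi powr (real (Suc n) - 1)" by (rule fib_upper_powr) simp
  show "real (LL n) \<le> phi powr U n" by (rule assms(1))
  show "phi powr 0 \<le> real 1" using phi_gt1 by simp
  show "U n + (real (Suc n) - 1) - 0 \<le> U (Suc n)" using assms(2) by simp
qed

lemma div_step:
  assumes "real (LL n) \<le> phi powr U n" "k dvd Suc n" "1 \<le> k" "k \<le> n"
    "U n + (real (Suc n) - 1) - (real k - 2) \<le> U (Suc n)"
  shows "real (LL (Suc n)) \<le> phi powr U (Suc n)"
proof (rule apply_step[where g="fib k" and h="fib (Suc n)" and a="real k - 2" and b="real (Suc n) - 1"])
  show "LL (Suc n) * fib k \<le> LL n * fib (Suc n)"
    using assms by (intro step_gen fib_dvd_LL fib_dvd_mono) auto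
  show "real (fib (Suc n)) \<le> phi powr (real (Suc n) - 1)" by (rule fib_upper_powr) simp
  show "phi powr (real k - 2) \<le> real (fib k)" using assms(3) by (rule fib_lower_powr)
  show "real (LL n) \<le> phi powr U n" by (rule assms(1))
  show "U n + (real (Suc n) - 1) - (real k - 2) \<le> U (Suc n)" by (rule assms(5))
qed

lemma gcd_six: "gcd (3*s+3) (2*s+2) = (s+1::nat)"
proof -
  have "gcd ((s+1)*3) ((s+1)*2) = (s+1) * gcd 3 (2::nat)" by (rule gcd_mult_distrib_nat[symmetric])
  thus ?thesis by (simp add: algebra_simps)
qed

lemma six_step:
  assumes "real (LL (6*s+5)) \<le> phi powr U (6*s+5)"
  shows "real (LL (Suc (6*s+5))) \<le> phi powr U (Suc (6*s+5))"
proof -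
  define n where "n = 6*s+5"
  have nN: "Suc n = 6*s+6" unfolding n_def by simp
  define g where "g = lcm (fib (3*s+3)) (fib (2*s+2))"
  have gd1: "g dvd LL n" unfolding g_def n_def by (intro lcm_least fib_dvd_LL) auto
  have gd2: "g dvd fib (Suc n)" unfolding g_def nN
  proof (intro lcm_least fib_dvd_mono)
    show "3*s+3 dvd 6*s+6" by (rule dvdI[where k=2]) simp
    show "2*s+2 dvd 6*s+6" by (rule dvdI[where k=3]) simp
  qed
  have st: "LL (Suc n) * g \<le> LL n * fib (Suc n)" by (rule step_gen[OF gd1 gd2])
  have gf: "gcd (fib (3*s+3)) (fib (2*s+2)) = fib (s+1)" by (simp only: fib_gcd[symmetric] gcd_six)
  have "fib (3*s+3) * fib (2*s+2) = gcd (fib (3*s+3)) (fib (2*s+2)) * g"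
    unfolding g_def by (rule prod_gcd_lcm_nat)
  hence ge: "g * fib (s+1) = fib (3*s+3) * fib (2*s+2)" unfolding gf by simp
  have "LL (Suc n) * g * fib (s+1) \<le> LL n * fib (Suc n) * fib (s+1)" using st by (rule mult_right_mono) simp
  hence st2: "LL (Suc n) * (fib (3*s+3) * fib (2*s+2)) \<le> LL n * (fib (Suc n) * fib (s+1))"
    unfolding ge[symmetric] by (simp only: mult.assoc)
  have A: "phi powr ((real (3*s+3) - 2) + (real (2*s+2) - 2)) \<le> real (fib (3*s+3) * fib (2*s+2))"
  proof -
    have "phi powr ((real (3*s+3) - 2) + (real (2*s+2) - 2)) = phi powr (real (3*s+3) - 2) * phi powr (real (2*s+2) - 2)"
      by (rule powr_add)
    also have "\<dots> \<le> real (fib (3*s+3)) * real (fib (2*s+2))"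
      by (intro mult_mono fib_lower_powr) auto
    finally show ?thesis by simp
  qed
  have B: "real (fib (Suc n) * fib (s+1)) \<le> phi powr ((real (Suc n) - 1) + (real (s+1) - 1))"
  proof -
    have "real (fib (Suc n)) * real (fib (s+1)) \<le> phi powr (real (Suc n) - 1) * phi powr (real (s+1) - 1)"
      by (intro mult_mono fib_upper_powr) auto
    also have "\<dots> = phi powr ((real (Suc n) - 1) + (real (s+1) - 1))" by (rule powr_add[symmetric])
    finally show ?thesis by simp
  qed
  have C: "U n + ((real (Suc n) - 1) + (real (s+1) - 1)) - ((real (3*s+3) - 2) + (real (2*s+2) - 2)) \<le> U (Suc n)"
  proof -
    have "U n = (real (6*s+5))\<^sup>2 / 3 + real (6*s+5) - 4/3" unfolding n_def by (rule U5)
    moreover have "U (Suc n) = (real (6*(s+1)))\<^sup>2 / 3 + 2 * real (6*(s+1)) / 3"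
      unfolding nN using U0[of "s+1"] by (simp add: algebra_simps)
    ultimately show ?thesis unfolding nN by (simp add: power2_eq_square field_simps)
  qed
  have "real (LL (Suc n)) \<le> phi powr U (Suc n)"
    by (rule apply_step[OF st2 _ A B C]) (use assms n_def in simp)
  thus ?thesis unfolding n_def .
qed

lemma c1: "U (6*t) + (real (Suc (6*t)) - 1) \<le> U (Suc (6*t))"
proof -
  have e: "Suc (6*t) = 6*t+1" by simp
  show ?thesis unfolding e U0 U1 by (simp add: power2_eq_square field_simps)
qed

lemma c2: "U (6*t+1) + (real (Suc (6*t+1)) - 1) - (real (3*t+1) - 2) \<le> U (Suc (6*t+1))"
proof -
  have e: "Suc (6*t+1) = 6*t+2" by simp
  show ?thesis unfolding e U1 U2 by (simp add: power2_eq_square field_simps)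
qed

lemma c3: "U (6*t+2) + (real (Suc (6*t+2)) - 1) - (real (2*t+1) - 2) \<le> U (Suc (6*t+2))"
proof -
  have e: "Suc (6*t+2) = 6*t+3" by simp
  show ?thesis unfolding e U2 U3 by (simp add: power2_eq_square field_simps)
qed

lemma c4: "U (6*t+3) + (real (Suc (6*t+3)) - 1) - (real (3*t+2) - 2) \<le> U (Suc (6*t+3))"
proof -
  have e: "Suc (6*t+3) = 6*t+4" by simp
  show ?thesis unfolding e U3 U4 by (simp add: power2_eq_square field_simps)
qed

lemma c5: "U (6*t+4) + (real (Suc (6*t+4)) - 1) \<le> U (Suc (6*t+4))"
proof -
  have e: "Suc (6*t+4) = 6*t+5" by simp
  show ?thesis unfolding e U4 U5 by (simp add: power2_eq_square field_simps)
qed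

lemma upper: "real (LL n) \<le> phi powr U n"
proof (induction n)
  case 0
  have "LL 0 = 1" by simp
  moreover have "U 0 = 0" by (simp add: U_def)
  ultimately show ?case using phi_gt1 by simp
next
  case (Suc n)
  define t where "t = Suc n div 6"
  define r where "r = Suc n mod 6"
  have N: "Suc n = 6*t + r" unfolding t_def r_def by simp
  have r6: "r < 6" unfolding r_def by simp
  consider "r = 0" | "r = 1" | "r = 2" | "r = 3" | "r = 4" | "r = 5" using r6 by linarith
  thus ?case
  proof cases
    case 1
    then obtain s where s: "t = Suc s" using N by (cases t) auto
    have nE: "n = 6*s+5" using N 1 s by simp
    show ?thesis using six_step[of s] Suc.IH unfolding nE by blast
  next
    case 2
    have nE: "n = 6*t" using N 2 by simp
    show ?thesis unfolding nE by (rule simple_step[OF Suc.IH[unfolded nE] c1])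
  next
    case 3
    have nE: "n = 6*t+1" using N 3 by simp
    show ?thesis unfolding nE
    proof (rule div_step[OF Suc.IH[unfolded nE] _ _ _ c2])
      show "3*t+1 dvd Suc (6*t+1)" by (rule dvdI[where k=2]) simp
    qed simp_all
  next
    case 4
    have nE: "n = 6*t+2" using N 4 by simp
    show ?thesis unfolding nE
    proof (rule div_step[OF Suc.IH[unfolded nE] _ _ _ c3])
      show "2*t+1 dvd Suc (6*t+2)" by (rule dvdI[where k=3]) simp
    qed simp_all
  next
    case 5
    have nE: "n = 6*t+3" using N 5 by simp
    show ?thesis unfolding nE
    proof (rule div_step[OF Suc.IH[unfolded nE] _ _ _ c4])
      show "3*t+2 dvd Suc (6*t+3)" by (rule dvdI[where k=2]) simp
    qed simp_all
  next
    case 6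
    have nE: "n = 6*t+4" using N 6 by simp
    show ?thesis unfolding nE by (rule simple_step[OF Suc.IH[unfolded nE] c5])
  qed
qed

theorem mainTheorem7:
  fixes n :: nat
  assumes "n \<ge> 1"
  shows "golden_ratio powr ((real n)\<^sup>2 / 4 - 9 / 4) \<le> real (Lcm (fib ` {1..n}))
       \<and> real (Lcm (fib ` {1..n})) \<le> golden_ratio powr ((real n)\<^sup>2 / 3 + 4 * real n / 3)"
proof
  show "golden_ratio powr ((real n)\<^sup>2 / 4 - 9 / 4) \<le> real (Lcm (fib ` {1..n}))"
    by (rule lower_bound[OF assms])
  have "real (Lcm (fib ` {1..n})) \<le> phi powr U n" by (rule upper)
  also have "\<dots> \<le> golden_ratio powr ((real n)\<^sup>2 / 3 + 4 * real n / 3)"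
    using U_le[of n] phi_gt1 by (intro powr_mono) auto
  finally show "real (Lcm (fib ` {1..n})) \<le> golden_ratio powr ((real n)\<^sup>2 / 3 + 4 * real n / 3)" .
qed

end
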